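(* Let $d=2$. Assume $\beta\ne0$, $|\sigma^{(1)}|\ne|\sigma^{(2)}|$, and for $\alpha=1,2$: $\eta^{(\alpha)}\ne0$ and $\mathbf v^{(\alpha)}_+\not\equiv0$, $\mathbf v^{(\alpha)}_-\not\equiv0$. Then $$\widetilde f_{e,l}\le f^{(1)}\le\widetilde f_{e,u}.$$ Moreover $\widetilde f_{e,l}=f^{(1)}$ if and only if $\mathbf v^{(1)}_+$ or $\mathbf v^{(1)}_-$ is a nonzero constant on phase 1, and $\widetilde f_{e,u}=f^{(1)}$ if and only if $\mathbf v^{(2)}_+$ or $\mathbf v^{(2)}_-$ is a nonzero constant on phase 2. Finally $f_{e,l}\le\widetilde f_{e,l}$, with equality if and only if $B^{(1)}_{12}f_{e,l}=\mathbf e^{(1)}_1\cdot R_\perp\mathbf e^{(1)}_2$, and $\widetilde f_{e,u}\le f_{e,u}$, with equality if and only if $B^{(2)}_{12}(1-f_{e,u})=\mathbf e^{(2)}_1\cdot R_\perp\mathbf e^{(2)}_2$.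
   Context: Let $\Omega\subset\mathbb{R}^2$ be a bounded Lipschitz domain and let $\chi^{(1)}$ be the indicator function of a measurable subset of $\Omega$ ("phase 1"), $\chi^{(2)}=1-\chi^{(1)}$ ("phase 2"). Let $\sigma^{(\alpha)}=\sigma^{(\alpha)}_1+\mathrm{i}\sigma^{(\alpha)}_2$ ($\alpha=1,2$) be complex constants with $\sigma^{(\alpha)}_1>0$ and $\sigma^{(1)}\neq\sigma^{(2)}$, and $\sigma=\sigma^{(1)}\chi^{(1)}+\sigma^{(2)}\chi^{(2)}$. Let $V\in H^1(\Omega;\mathbb C)$ be a weak solution of $\nabla\cdot(\sigma\nabla V)=0$ in $\Omega$. Set $\mathbf E=-\nabla V=\mathbf E_1+\mathrm{i}\mathbf E_2$ with $\mathbf E_1,\mathbf E_2$ real. $\langle u\rangle=|\Omega|^{-1}\int_\Omega u$; $f^{(1)}=\langle\chi^{(1)}\rangle\in(0,1)$. For $\alpha,m=1,2$: $\mathbf E^{(\alpha)}_m=\chi^{(\alpha)}\mathbf E_m$, $\mathbf e^{(\alpha)}_m=\langle\mathbf E^{(\alpha)}_m\rangle$, $\eta^{(\alpha)}=\langle\|\mathbf E^{(\alpha)}_1\|^2\rangle+\langle\|\mathbf E^{(\alpha)}_2\|^2\rangle$. $\beta=\sigma^{(1)}_1\sigma^{(2)}_2-\sigma^{(1)}_2\sigma^{(2)}_1$. $f_{e,l}=(\|\mathbf e^{(1)}_1\|^2+\|\mathbf e^{(1)}_2\|^2)/\eta^{(1)}$, $f_{e,u}=1-(\|\mathbf e^{(2)}_1\|^2+\|\mathbf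 e^{(2)}_2\|^2)/\eta^{(2)}$. Let $R_\perp=\begin{bmatrix}0&1\\-1&0\end{bmatrix}$, $B^{(\alpha)}_{12}=\langle\mathbf E^{(\alpha)}_1\cdot R_\perp\mathbf E^{(\alpha)}_2\rangle$, and $\mathbf v^{(\alpha)}_\pm=\mathbf E^{(\alpha)}_1\pm R_\perp\mathbf E^{(\alpha)}_2$. Define $$\widetilde f_{e,l}=\max\Big\{\frac{\|\langle\mathbf v^{(1)}_-\rangle\|^2}{\langle\|\mathbf v^{(1)}_-\|^2\rangle},\frac{\|\langle\mathbf v^{(1)}_+\rangle\|^2}{\langle\|\mathbf v^{(1)}_+\|^2\rangle}\Big\},\qquad \widetilde f_{e,u}=\min\Big\{1-\frac{\|\langle\mathbf v^{(2)}_-\rangle\|^2}{\langle\|\mathbf v^{(2)}_-\|^2\rangle},1-\frac{\|\langle\mathbf v^{(2)}_+\rangle\|^2}{\langle\|\mathbf v^{(2)}_+\|^2\rangle}\Big\}.$$ *)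

theory Defs
  imports "HOL-Analysis.Analysis"
begin

type_synonym pt = "real^2"

definition lipschitz_domain :: "pt set \<Rightarrow> bool" where
  "lipschitz_domain \<Omega> \<longleftrightarrow> open \<Omega> \<and> connected \<Omega> \<and> \<Omega> \<noteq> {} \<and> bounded \<Omega> \<and>
     (\<forall>p \<in> frontier \<Omega>. \<exists>r > 0. \<exists>(Q :: pt \<Rightarrow> pt) (L :: real) (g :: real \<Rightarrow> real).
        orthogonal_transformation Q \<and> lipschitz_on L UNIV g \<and>
        (\<forall>x \<in> ball p r. x \<in> \<Omega> \<longleftrightarrow> g ((Q (x - p)) $ 1) < (Q (x - p)) $ 2))"

definition test_fun :: "pt set \<Rightarrow> (pt \<Rightarrow> real) \<Rightarrow> (pt \<Rightarrow> pt) \<Rightarrow> bool" where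
  "test_fun \<Omega> \<phi> D\<phi> \<longleftrightarrow>
     (\<forall>x. (\<phi> has_derivative (\<lambda>h. D\<phi> x \<bullet> h)) (at x)) \<and> continuous_on UNIV D\<phi> \<and>
     compact (closure {x. \<phi> x \<noteq> 0}) \<and> closure {x. \<phi> x \<noteq> 0} \<subseteq> \<Omega>"

definition cvec :: "pt \<Rightarrow> pt \<Rightarrow> complex^2" where
  "cvec a b = (\<chi> i. Complex (a $ i) (b $ i))"

definition H1_with_field :: "pt set \<Rightarrow> (pt \<Rightarrow> complex) \<Rightarrow> (pt \<Rightarrow> pt) \<Rightarrow> (pt \<Rightarrow> pt) \<Rightarrow> bool" where
  "H1_with_field \<Omega> V E1 E2 \<longleftrightarrow>
     V \<in> borel_measurable (lebesgue_on \<Omega>) \<and> integrable (lebesgue_on \<Omega>) (\<lambda>x. (cmod (V x))\<^sup>2) \<and>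
     E1 \<in> borel_measurable (lebesgue_on \<Omega>) \<and> integrable (lebesgue_on \<Omega>) (\<lambda>x. (norm (E1 x))\<^sup>2) \<and>
     E2 \<in> borel_measurable (lebesgue_on \<Omega>) \<and> integrable (lebesgue_on \<Omega>) (\<lambda>x. (norm (E2 x))\<^sup>2) \<and>
     (\<forall>\<phi> D\<phi>. test_fun \<Omega> \<phi> D\<phi> \<longrightarrow> (\<forall>i.
        integral\<^sup>L (lebesgue_on \<Omega>) (\<lambda>x. V x * complex_of_real (D\<phi> x $ i))
        = - integral\<^sup>L (lebesgue_on \<Omega>) (\<lambda>x. (- cvec (E1 x) (E2 x)) $ i * complex_of_real (\<phi> x))))"

definition chi :: "pt set \<Rightarrow> nat \<Rightarrow> pt \<Rightarrow> real" where
  "chi P \<alpha> x = (if \<alpha> = 1 then indicator P x else 1 - indicator P x)"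

definition sigma_fun :: "complex \<Rightarrow> complex \<Rightarrow> pt set \<Rightarrow> pt \<Rightarrow> complex" where
  "sigma_fun s1 s2 P x = s1 * complex_of_real (chi P 1 x) + s2 * complex_of_real (chi P 2 x)"

text \<open>Weak solution of div(sigma grad V) = 0 (tested with real C^1_c functions), grad V = -(E1 + i E2).\<close>
definition weak_solution :: "pt set \<Rightarrow> (pt \<Rightarrow> complex) \<Rightarrow> complex \<Rightarrow> complex \<Rightarrow> pt set \<Rightarrow> (pt \<Rightarrow> pt) \<Rightarrow> (pt \<Rightarrow> pt) \<Rightarrow> bool" where
  "weak_solution \<Omega> V s1 s2 P E1 E2 \<longleftrightarrow> H1_with_field \<Omega> V E1 E2 \<and>
     (\<forall>\<phi> D\<phi>. test_fun \<Omega> \<phi> D\<phi> \<longrightarrow>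
        integral\<^sup>L (lebesgue_on \<Omega>) (\<lambda>x. sigma_fun s1 s2 P x *
           (\<Sum>i\<in>UNIV. (- cvec (E1 x) (E2 x)) $ i * complex_of_real (D\<phi> x $ i))) = 0)"

definition avg :: "pt set \<Rightarrow> (pt \<Rightarrow> 'b::{banach,second_countable_topology}) \<Rightarrow> 'b" where
  "avg \<Omega> u = (1 / measure lebesgue \<Omega>) *\<^sub>R integral\<^sup>L (lebesgue_on \<Omega>) u"

definition Rperp :: "real^2^2" where
  "Rperp = vector [vector [0, 1], vector [-1, 0]]"

definition Eph :: "pt set \<Rightarrow> nat \<Rightarrow> (pt \<Rightarrow> pt) \<Rightarrow> pt \<Rightarrow> pt" where
  "Eph P \<alpha> Em x = chi P \<alpha> x *\<^sub>R Em x"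

definition vplus :: "pt set \<Rightarrow> nat \<Rightarrow> (pt \<Rightarrow> pt) \<Rightarrow> (pt \<Rightarrow> pt) \<Rightarrow> pt \<Rightarrow> pt" where
  "vplus P \<alpha> E1 E2 x = Eph P \<alpha> E1 x + Rperp *v Eph P \<alpha> E2 x"

definition vminus :: "pt set \<Rightarrow> nat \<Rightarrow> (pt \<Rightarrow> pt) \<Rightarrow> (pt \<Rightarrow> pt) \<Rightarrow> pt \<Rightarrow> pt" where
  "vminus P \<alpha> E1 E2 x = Eph P \<alpha> E1 x - Rperp *v Eph P \<alpha> E2 x"

definition eta :: "pt set \<Rightarrow> pt set \<Rightarrow> nat \<Rightarrow> (pt \<Rightarrow> pt) \<Rightarrow> (pt \<Rightarrow> pt) \<Rightarrow> real" where
  "eta \<Omega> P \<alpha> E1 E2 = avg \<Omega> (\<lambda>x. (norm (Eph P \<alpha> E1 x))\<^sup>2) + avg \<Omega> (\<lambda>x. (norm (Eph P \<alpha> E2 x))\<^sup>2)"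

definition Bcoef :: "pt set \<Rightarrow> pt set \<Rightarrow> nat \<Rightarrow> (pt \<Rightarrow> pt) \<Rightarrow> (pt \<Rightarrow> pt) \<Rightarrow> real" where
  "Bcoef \<Omega> P \<alpha> E1 E2 = avg \<Omega> (\<lambda>x. Eph P \<alpha> E1 x \<bullet> (Rperp *v Eph P \<alpha> E2 x))"

definition ratio :: "pt set \<Rightarrow> (pt \<Rightarrow> pt) \<Rightarrow> real" where
  "ratio \<Omega> v = (norm (avg \<Omega> v))\<^sup>2 / avg \<Omega> (\<lambda>x. (norm (v x))\<^sup>2)"

definition f_el :: "pt set \<Rightarrow> pt set \<Rightarrow> (pt \<Rightarrow> pt) \<Rightarrow> (pt \<Rightarrow> pt) \<Rightarrow> real" where
  "f_el \<Omega> P E1 E2 = ((norm (avg \<Omega> (Eph P 1 E1)))\<^sup>2 + (norm (avg \<Omega> (Eph P 1 E2)))\<^sup>2) / eta \<Omega> P 1 E1 E2"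

definition f_eu :: "pt set \<Rightarrow> pt set \<Rightarrow> (pt \<Rightarrow> pt) \<Rightarrow> (pt \<Rightarrow> pt) \<Rightarrow> real" where
  "f_eu \<Omega> P E1 E2 = 1 - ((norm (avg \<Omega> (Eph P 2 E1)))\<^sup>2 + (norm (avg \<Omega> (Eph P 2 E2)))\<^sup>2) / eta \<Omega> P 2 E1 E2"

definition ft_el :: "pt set \<Rightarrow> pt set \<Rightarrow> (pt \<Rightarrow> pt) \<Rightarrow> (pt \<Rightarrow> pt) \<Rightarrow> real" where
  "ft_el \<Omega> P E1 E2 = max (ratio \<Omega> (vminus P 1 E1 E2)) (ratio \<Omega> (vplus P 1 E1 E2))"

definition ft_eu :: "pt set \<Rightarrow> pt set \<Rightarrow> (pt \<Rightarrow> pt) \<Rightarrow> (pt \<Rightarrow> pt) \<Rightarrow> real" where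
  "ft_eu \<Omega> P E1 E2 = min (1 - ratio \<Omega> (vminus P 2 E1 E2)) (1 - ratio \<Omega> (vplus P 2 E1 E2))"

end

theory Submission imports Defs begin

lemma cs_core:
  fixes M :: "'a measure" and g :: "'a \<Rightarrow> real" and w :: "'a \<Rightarrow> real^2"
  assumes fin: "finite_measure M"
  and gm: "g \<in> borel_measurable M" and g01: "\<And>x. g x = 0 \<or> g x = 1"
  and wm: "w \<in> borel_measurable M" and wi: "integrable M (\<lambda>x. (norm (w x))\<^sup>2)"
  and Ipos: "0 < integral\<^sup>L M g"
  and vdef: "v = (\<lambda>x. g x *\<^sub>R w x)"
  shows "(norm (integral\<^sup>L M v))\<^sup>2 \<le> integral\<^sup>L M g * integral\<^sup>L M (\<lambda>x. (norm (v x))\<^sup>2)"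
   and "(norm (integral\<^sup>L M v))\<^sup>2 = integral\<^sup>L M g * integral\<^sup>L M (\<lambda>x. (norm (v x))\<^sup>2)
        \<longleftrightarrow> (\<exists>c. AE x in M. g x = 1 \<longrightarrow> v x = c)"
proof -
  interpret finite_measure M by (rule fin)
  have vm: "v \<in> borel_measurable M" unfolding vdef using gm wm by measurable
  have gabs: "norm (g x) \<le> norm (1::real)" for x using g01[of x] by auto
  have gi: "integrable M g"
    by (rule Bochner_Integration.integrable_bound[OF integrable_const[of "1::real"]]) (use gm gabs in \<open>auto intro!: AE_I2\<close>)
  have nv: "norm (v x) \<le> norm (w x)" for x using g01[of x] by (auto simp: vdef)
  have v2i: "integrable M (\<lambda>x. (norm (v x))\<^sup>2)"
    apply (rule Bochner_Integration.integrable_bound[OF wi])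
    using vm apply measurable
    using nv by (auto intro!: AE_I2 power_mono)
  have vi: "integrable M v"
  proof (rule Bochner_Integration.integrable_bound[OF Bochner_Integration.integrable_add[OF integrable_const[of "1::real"] wi]])
    show "v \<in> borel_measurable M" by (rule vm)
    show "AE x in M. norm (v x) \<le> norm (1 + (norm (w x))\<^sup>2)"
    proof (rule AE_I2)
      fix x
      have "norm (w x) \<le> 1 + (norm (w x))\<^sup>2"
      proof -
        have "0 \<le> (norm (w x) - 1)\<^sup>2" by simp
        then have "2 * norm (w x) \<le> 1 + (norm (w x))\<^sup>2" by (simp add: power2_eq_square algebra_simps)
        then show ?thesis using norm_ge_zero[of "w x"] by linarith
      qed
      then show "norm (v x) \<le> norm (1 + (norm (w x))\<^sup>2)" using nv[of x] by simp
    qed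
  qed
  define I where "I = integral\<^sup>L M g"
  define m where "m = integral\<^sup>L M v"
  define c where "c = (1/I) *\<^sub>R m"
  define h where "h = (\<lambda>x. (norm (v x - g x *\<^sub>R c))\<^sup>2)"
  have hx: "h x = (norm (v x))\<^sup>2 - 2 * (v x \<bullet> c) + g x * (norm c)\<^sup>2" for x
    using g01[of x] by (auto simp: h_def vdef power2_norm_eq_inner inner_diff_left inner_diff_right inner_commute)
  have i1: "integrable M (\<lambda>x. v x \<bullet> c)" using vi by simp
  have i2: "integrable M (\<lambda>x. g x * (norm c)\<^sup>2)" using gi by simp
  have hi: "integrable M h" unfolding hx using v2i i1 i2 by auto
  have hint: "integral\<^sup>L M h = integral\<^sup>L M (\<lambda>x. (norm (v x))\<^sup>2) - (norm m)\<^sup>2 / I"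
  proof -
    have "integral\<^sup>L M h = integral\<^sup>L M (\<lambda>x. (norm (v x))\<^sup>2) - 2 * (m \<bullet> c) + I * (norm c)\<^sup>2"
      unfolding hx using v2i i1 i2 vi by (simp add: m_def I_def)
    also have "\<dots> = integral\<^sup>L M (\<lambda>x. (norm (v x))\<^sup>2) - (norm m)\<^sup>2 / I"
      using Ipos by (simp add: c_def I_def field_simps power2_eq_square norm_eq_sqrt_inner)
    finally show ?thesis .
  qed
  have hnn: "0 \<le> integral\<^sup>L M h" by (simp add: h_def)
  have IP: "0 < I" using Ipos by (simp add: I_def)
  show "(norm (integral\<^sup>L M v))\<^sup>2 \<le> integral\<^sup>L M g * integral\<^sup>L M (\<lambda>x. (norm (v x))\<^sup>2)"
    using hnn hint IP by (simp add: m_def I_def[symmetric] field_simps)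
  show "(norm (integral\<^sup>L M v))\<^sup>2 = integral\<^sup>L M g * integral\<^sup>L M (\<lambda>x. (norm (v x))\<^sup>2)
        \<longleftrightarrow> (\<exists>c. AE x in M. g x = 1 \<longrightarrow> v x = c)"
  proof
    assume eq: "(norm (integral\<^sup>L M v))\<^sup>2 = integral\<^sup>L M g * integral\<^sup>L M (\<lambda>x. (norm (v x))\<^sup>2)"
    then have "integral\<^sup>L M h = 0" using hint IP by (simp add: m_def I_def[symmetric] field_simps)
    then have "AE x in M. h x = 0" using integral_nonneg_eq_0_iff_AE[OF hi] by (simp add: h_def)
    then have "AE x in M. g x = 1 \<longrightarrow> v x = c" by eventually_elim (simp add: h_def)
    then show "\<exists>c. AE x in M. g x = 1 \<longrightarrow> v x = c" by blast
  next
    assume "\<exists>c. AE x in M. g x = 1 \<longrightarrow> v x = c"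
    then obtain d where d: "AE x in M. g x = 1 \<longrightarrow> v x = d" by blast
    have ae: "AE x in M. v x = g x *\<^sub>R d"
      using d by eventually_elim (use g01 in \<open>auto simp: vdef\<close>)
    have "m = integral\<^sup>L M (\<lambda>x. g x *\<^sub>R d)" unfolding m_def
      by (rule integral_cong_AE) (use vm gm ae in auto)
    also have "\<dots> = I *\<^sub>R d" using gi by (simp add: I_def integral_scaleR_left)
    finally have mI: "m = I *\<^sub>R d" .
    have ae2: "AE x in M. (norm (v x))\<^sup>2 = g x * (norm d)\<^sup>2"
      using ae proof eventually_elim
      case (elim x) then show ?case using g01[of x] by auto
    qed
    have "integral\<^sup>L M (\<lambda>x. (norm (v x))\<^sup>2) = integral\<^sup>L M (\<lambda>x. g x * (norm d)\<^sup>2)"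
      by (rule integral_cong_AE) (use vm gm ae2 in auto)
    also have "\<dots> = I * (norm d)\<^sup>2" by (simp add: I_def)
    finally show "(norm (integral\<^sup>L M v))\<^sup>2 = integral\<^sup>L M g * integral\<^sup>L M (\<lambda>x. (norm (v x))\<^sup>2)"
      using mI by (simp add: m_def[symmetric] I_def[symmetric] power2_eq_square)
  qed
qed

lemma Rperp_comp: "(Rperp *v y) $ 1 = y $ 2" "(Rperp *v y) $ 2 = - (y $ 1)"
  by (simp_all add: Rperp_def matrix_vector_mult_def sum_2)
lemma Rperp_inner: "(Rperp *v x) \<bullet> (Rperp *v y) = x \<bullet> y"
  by (simp add: inner_vec_def sum_2 Rperp_comp)
lemma Rperp_norm: "norm (Rperp *v x) = norm x"
  by (simp add: norm_eq_sqrt_inner Rperp_inner)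
lemma Rperp_scaleR: "Rperp *v (c *\<^sub>R x) = c *\<^sub>R (Rperp *v x)"
  by (simp add: vec_eq_iff forall_2 Rperp_comp)
lemma mediant:
  fixes a b e B :: real
  assumes p: "0 < e + 2*B" and m: "0 < e - 2*B"
  shows "a / e \<le> max ((a - 2*b)/(e - 2*B)) ((a + 2*b)/(e + 2*B))"
    and "a / e = max ((a - 2*b)/(e - 2*B)) ((a + 2*b)/(e + 2*B)) \<longleftrightarrow> B * (a / e) = b"
proof -
  have e: "0 < e" using p m by linarith
  have k1: "(a + 2*b)/(e + 2*B) - a/e = 2*(b*e - a*B)/(e*(e+2*B))"
    using e p by (simp add: field_simps)
  have k2: "(a - 2*b)/(e - 2*B) - a/e = - 2*(b*e - a*B)/(e*(e-2*B))"
    using e m by (simp add: field_simps)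
  have d1: "0 < e*(e+2*B)" "0 < e*(e-2*B)" using e p m by auto
  have iff: "B * (a/e) = b \<longleftrightarrow> b*e - a*B = 0" using e by (auto simp: field_simps)
  consider "b*e - a*B \<ge> 0" | "b*e - a*B \<le> 0" by linarith
  then have "a / e \<le> (a + 2*b)/(e + 2*B) \<or> a / e \<le> (a - 2*b)/(e - 2*B)"
  proof cases
    case 1 then have "0 \<le> 2*(b*e - a*B)/(e*(e+2*B))" using d1 by simp
    then show ?thesis using k1 by linarith
  next
    case 2 then have "0 \<le> - 2*(b*e - a*B)/(e*(e-2*B))" using d1 by (simp add: divide_nonneg_pos)
    then show ?thesis using k2 by linarith
  qed
  then show "a / e \<le> max ((a - 2*b)/(e - 2*B)) ((a + 2*b)/(e + 2*B))" by auto
  show "a / e = max ((a - 2*b)/(e - 2*B)) ((a + 2*b)/(e + 2*B)) \<longleftrightarrow> B * (a / e) = b"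
  proof
    assume h: "a / e = max ((a - 2*b)/(e - 2*B)) ((a + 2*b)/(e + 2*B))"
    then have "(a + 2*b)/(e + 2*B) - a/e = 0 \<or> (a - 2*b)/(e - 2*B) - a/e = 0"
      by (auto simp: max_def split: if_splits)
    then have "b*e - a*B = 0" unfolding k1 k2 using d1 by auto
    then show "B * (a / e) = b" using iff by simp
  next
    assume "B * (a / e) = b"
    then have z: "b*e - a*B = 0" using iff by simp
    then have "(a + 2*b)/(e + 2*B) = a/e" "(a - 2*b)/(e - 2*B) = a/e" using k1 k2 by auto
    then show "a / e = max ((a - 2*b)/(e - 2*B)) ((a + 2*b)/(e + 2*B))" by simp
  qed
qed

lemma sqint_int:
  fixes f :: "'a \<Rightarrow> 'b::{banach,second_countable_topology}"
  assumes "finite_measure M" "f \<in> borel_measurable M" "integrable M (\<lambda>x. (norm (f x))\<^sup>2)"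
  shows "integrable M f"
proof -
  interpret finite_measure M by fact
  show ?thesis
  proof (rule Bochner_Integration.integrable_bound[OF Bochner_Integration.integrable_add[OF integrable_const[of "1::real"] assms(3)]])
    show "f \<in> borel_measurable M" by fact
    show "AE x in M. norm (f x) \<le> norm (1 + (norm (f x))\<^sup>2)"
    proof (rule AE_I2)
      fix x
      have "0 \<le> (norm (f x) - 1)\<^sup>2" by simp
      then have "2 * norm (f x) \<le> 1 + (norm (f x))\<^sup>2" by (simp add: power2_eq_square algebra_simps)
      moreover have "0 \<le> norm (f x)" by simp
      ultimately have "norm (f x) \<le> 1 + (norm (f x))\<^sup>2" by linarith
      then show "norm (f x) \<le> norm (1 + (norm (f x))\<^sup>2)" by simp
    qed
  qed
qed

lemma cs_ratio:
  fixes \<Omega> :: "pt set" and g :: "pt \<Rightarrow> real" and w v :: "pt \<Rightarrow> pt"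
  assumes fin: "finite_measure (lebesgue_on \<Omega>)"
  and mu: "0 < measure lebesgue \<Omega>"
  and gm: "g \<in> borel_measurable (lebesgue_on \<Omega>)" and g01: "\<And>x. g x = 0 \<or> g x = 1"
  and wm: "w \<in> borel_measurable (lebesgue_on \<Omega>)" and wi: "integrable (lebesgue_on \<Omega>) (\<lambda>x. (norm (w x))\<^sup>2)"
  and gpos: "0 < avg \<Omega> g"
  and vdef: "v = (\<lambda>x. g x *\<^sub>R w x)"
  and nz: "\<not> (AE x in lebesgue_on \<Omega>. v x = 0)"
  shows "0 < avg \<Omega> (\<lambda>x. (norm (v x))\<^sup>2)"
    and "ratio \<Omega> v \<le> avg \<Omega> g"
    and "ratio \<Omega> v = avg \<Omega> g \<longleftrightarrow> (\<exists>c. c \<noteq> 0 \<and> (AE x in lebesgue_on \<Omega>. g x = 1 \<longrightarrow> v x = c))"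
proof -
  define M where "M = lebesgue_on \<Omega>"
  define \<mu> where "\<mu> = measure lebesgue \<Omega>"
  have mup: "0 < \<mu>" using mu by (simp add: \<mu>_def)
  have Ig: "0 < integral\<^sup>L M g" using gpos mup by (simp add: avg_def M_def \<mu>_def zero_less_divide_iff)
  have vm: "v \<in> borel_measurable M" unfolding vdef M_def using gm wm by measurable
  have nv: "norm (v x) \<le> norm (w x)" for x using g01[of x] by (auto simp: vdef)
  have v2i: "integrable M (\<lambda>x. (norm (v x))\<^sup>2)"
    apply (rule Bochner_Integration.integrable_bound[OF wi[folded M_def]])
    using vm apply measurable
    using nv by (auto intro!: AE_I2 power_mono)
  have c1: "(norm (integral\<^sup>L M v))\<^sup>2 \<le> integral\<^sup>L M g * integral\<^sup>L M (\<lambda>x. (norm (v x))\<^sup>2)"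
    and c2: "(norm (integral\<^sup>L M v))\<^sup>2 = integral\<^sup>L M g * integral\<^sup>L M (\<lambda>x. (norm (v x))\<^sup>2)
        \<longleftrightarrow> (\<exists>c. AE x in M. g x = 1 \<longrightarrow> v x = c)"
    using cs_core[OF fin[folded M_def] gm[folded M_def] g01 wm[folded M_def] wi[folded M_def] Ig vdef] by auto
  have S: "0 < integral\<^sup>L M (\<lambda>x. (norm (v x))\<^sup>2)"
  proof -
    have "integral\<^sup>L M (\<lambda>x. (norm (v x))\<^sup>2) \<noteq> 0"
    proof
      assume "integral\<^sup>L M (\<lambda>x. (norm (v x))\<^sup>2) = 0"
      then have "AE x in M. (norm (v x))\<^sup>2 = 0" using integral_nonneg_eq_0_iff_AE[OF v2i] by simp
      then have "AE x in M. v x = 0" by simp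
      then show False using nz unfolding M_def by blast
    qed
    moreover have "0 \<le> integral\<^sup>L M (\<lambda>x. (norm (v x))\<^sup>2)" by simp
    ultimately show ?thesis by linarith
  qed
  then show "0 < avg \<Omega> (\<lambda>x. (norm (v x))\<^sup>2)" using mup by (simp add: avg_def M_def[symmetric] \<mu>_def[symmetric])
  define N where "N = (norm (integral\<^sup>L M v))\<^sup>2"
  define G where "G = integral\<^sup>L M g"
  define T where "T = integral\<^sup>L M (\<lambda>x. (norm (v x))\<^sup>2)"
  have rat: "ratio \<Omega> v = N / (\<mu> * T)"
    using mup S by (simp add: ratio_def avg_def M_def[symmetric] \<mu>_def[symmetric] N_def T_def power2_eq_square field_simps)
  have ag: "avg \<Omega> g = G / \<mu>" by (simp add: avg_def M_def[symmetric] \<mu>_def[symmetric] G_def)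
  have le_iff: "N / (\<mu> * T) \<le> G / \<mu> \<longleftrightarrow> N \<le> G * T" using mup S[folded T_def]
    by (simp add: field_simps)
  have eq_iff: "N / (\<mu> * T) = G / \<mu> \<longleftrightarrow> N = G * T" using mup S[folded T_def]
    by (simp add: field_simps)
  show "ratio \<Omega> v \<le> avg \<Omega> g" using c1 le_iff rat ag by (simp add: N_def G_def T_def)
  show "ratio \<Omega> v = avg \<Omega> g \<longleftrightarrow> (\<exists>c. c \<noteq> 0 \<and> (AE x in lebesgue_on \<Omega>. g x = 1 \<longrightarrow> v x = c))"
  proof -
    have "(\<exists>c. AE x in M. g x = 1 \<longrightarrow> v x = c) \<longleftrightarrow> (\<exists>c. c \<noteq> 0 \<and> (AE x in M. g x = 1 \<longrightarrow> v x = c))"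
    proof safe
      fix c assume c: "AE x in M. g x = 1 \<longrightarrow> v x = c"
      show "\<exists>c. c \<noteq> 0 \<and> (AE x in M. g x = 1 \<longrightarrow> v x = c)"
      proof (cases "c = 0")
        case True
        have "AE x in M. v x = 0" using c
        proof eventually_elim
          case (elim x) then show ?case using g01[of x] True by (auto simp: vdef)
        qed
        then have False using nz unfolding M_def by blast
        then show ?thesis ..
      qed (use c in blast)
    qed blast
    then show ?thesis using c2 eq_iff rat ag unfolding N_def G_def T_def M_def by simp
  qed
qed


lemma Rperp_meas: "Y \<in> borel_measurable M \<Longrightarrow> (\<lambda>x. Rperp *v Y x) \<in> borel_measurable M"
  by (rule borel_measurable_continuous_on[OF linear_continuous_on[OF matrix_vector_mul_bounded_linear]])

lemma avg_lin:
  fixes X Y :: "pt \<Rightarrow> pt"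
  assumes fin: "finite_measure (lebesgue_on \<Omega>)"
  and Xm: "X \<in> borel_measurable (lebesgue_on \<Omega>)" and Xi: "integrable (lebesgue_on \<Omega>) (\<lambda>x. (norm (X x))\<^sup>2)"
  and Ym: "Y \<in> borel_measurable (lebesgue_on \<Omega>)" and Yi: "integrable (lebesgue_on \<Omega>) (\<lambda>x. (norm (Y x))\<^sup>2)"
  shows "avg \<Omega> (\<lambda>x. X x + Rperp *v Y x) = avg \<Omega> X + Rperp *v avg \<Omega> Y"
    and "avg \<Omega> (\<lambda>x. X x - Rperp *v Y x) = avg \<Omega> X - Rperp *v avg \<Omega> Y"
    and "avg \<Omega> (\<lambda>x. (norm (X x + Rperp *v Y x))\<^sup>2) = avg \<Omega> (\<lambda>x. (norm (X x))\<^sup>2) + avg \<Omega> (\<lambda>x. (norm (Y x))\<^sup>2) + 2 * avg \<Omega> (\<lambda>x. X x \<bullet> (Rperp *v Y x))"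
    and "avg \<Omega> (\<lambda>x. (norm (X x - Rperp *v Y x))\<^sup>2) = avg \<Omega> (\<lambda>x. (norm (X x))\<^sup>2) + avg \<Omega> (\<lambda>x. (norm (Y x))\<^sup>2) - 2 * avg \<Omega> (\<lambda>x. X x \<bullet> (Rperp *v Y x))"
proof -
  define M where "M = lebesgue_on \<Omega>"
  note fin' = fin[folded M_def] and Xm' = Xm[folded M_def] and Ym' = Ym[folded M_def]
    and Xi' = Xi[folded M_def] and Yi' = Yi[folded M_def]
  have XI: "integrable M X" by (rule sqint_int[OF fin' Xm' Xi'])
  have YI: "integrable M Y" by (rule sqint_int[OF fin' Ym' Yi'])
  have RYI: "integrable M (\<lambda>x. Rperp *v Y x)" by (rule integrable_bounded_linear[OF matrix_vector_mul_bounded_linear YI])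
  have RY: "integral\<^sup>L M (\<lambda>x. Rperp *v Y x) = Rperp *v integral\<^sup>L M Y"
    by (rule integral_bounded_linear[OF matrix_vector_mul_bounded_linear YI])
  have Bm: "(\<lambda>x. X x \<bullet> (Rperp *v Y x)) \<in> borel_measurable M"
    using Xm' Rperp_meas[OF Ym'] by measurable
  have BI: "integrable M (\<lambda>x. X x \<bullet> (Rperp *v Y x))"
  proof (rule Bochner_Integration.integrable_bound[OF Bochner_Integration.integrable_add[OF Xi' Yi'] Bm], rule AE_I2)
    fix x
    have "norm (X x \<bullet> (Rperp *v Y x)) \<le> norm (X x) * norm (Rperp *v Y x)"
      using Cauchy_Schwarz_ineq2 by simp
    also have "\<dots> = norm (X x) * norm (Y x)" by (simp add: Rperp_norm)
    also have "\<dots> \<le> (norm (X x))\<^sup>2 + (norm (Y x))\<^sup>2"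
    proof -
      have "0 \<le> (norm (X x) - norm (Y x))\<^sup>2" by simp
      then have "2 * (norm (X x) * norm (Y x)) \<le> (norm (X x))\<^sup>2 + (norm (Y x))\<^sup>2"
        by (simp add: power2_eq_square algebra_simps)
      moreover have "0 \<le> norm (X x) * norm (Y x)" by simp
      ultimately show ?thesis by linarith
    qed
    finally show "norm (X x \<bullet> (Rperp *v Y x)) \<le> norm ((norm (X x))\<^sup>2 + (norm (Y x))\<^sup>2)" by simp
  qed
  have pp: "(norm (X x + Rperp *v Y x))\<^sup>2 = (norm (X x))\<^sup>2 + (norm (Y x))\<^sup>2 + 2 * (X x \<bullet> (Rperp *v Y x))" for x
    by (simp add: power2_norm_eq_inner inner_add_left inner_add_right inner_commute Rperp_inner)
  have mm: "(norm (X x - Rperp *v Y x))\<^sup>2 = (norm (X x))\<^sup>2 + (norm (Y x))\<^sup>2 - 2 * (X x \<bullet> (Rperp *v Y x))" for x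
    by (simp add: power2_norm_eq_inner inner_diff_left inner_diff_right inner_commute Rperp_inner)
  show "avg \<Omega> (\<lambda>x. X x + Rperp *v Y x) = avg \<Omega> X + Rperp *v avg \<Omega> Y"
    unfolding avg_def M_def[symmetric] using XI RYI RY
    by (simp add: Bochner_Integration.integral_add scaleR_add_right Rperp_scaleR)
  show "avg \<Omega> (\<lambda>x. X x - Rperp *v Y x) = avg \<Omega> X - Rperp *v avg \<Omega> Y"
    unfolding avg_def M_def[symmetric] using XI RYI RY
    by (simp add: Bochner_Integration.integral_diff scaleR_diff_right Rperp_scaleR)
  show "avg \<Omega> (\<lambda>x. (norm (X x + Rperp *v Y x))\<^sup>2) = avg \<Omega> (\<lambda>x. (norm (X x))\<^sup>2) + avg \<Omega> (\<lambda>x. (norm (Y x))\<^sup>2) + 2 * avg \<Omega> (\<lambda>x. X x \<bullet> (Rperp *v Y x))"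
    unfolding avg_def M_def[symmetric] pp using Xi' Yi' BI
    by (simp add: Bochner_Integration.integral_add algebra_simps)
  show "avg \<Omega> (\<lambda>x. (norm (X x - Rperp *v Y x))\<^sup>2) = avg \<Omega> (\<lambda>x. (norm (X x))\<^sup>2) + avg \<Omega> (\<lambda>x. (norm (Y x))\<^sup>2) - 2 * avg \<Omega> (\<lambda>x. X x \<bullet> (Rperp *v Y x))"
    unfolding avg_def M_def[symmetric] mm using Xi' Yi' BI
    by (simp add: Bochner_Integration.integral_add Bochner_Integration.integral_diff algebra_simps)
qed


lemma chi01: "chi P \<alpha> x = 0 \<or> chi P \<alpha> x = 1"
  by (auto simp: chi_def indicator_def)

lemma chi_meas: "P \<in> sets M \<Longrightarrow> chi P \<alpha> \<in> borel_measurable M"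
  unfolding chi_def by (cases "\<alpha> = 1") (simp_all add: borel_measurable_indicator)

lemma phase:
  fixes \<Omega> P :: "pt set" and E1 E2 :: "pt \<Rightarrow> pt"
  assumes fin: "finite_measure (lebesgue_on \<Omega>)"
  and mu: "0 < measure lebesgue \<Omega>"
  and Pm: "P \<in> sets (lebesgue_on \<Omega>)"
  and E1m: "E1 \<in> borel_measurable (lebesgue_on \<Omega>)" and E1i: "integrable (lebesgue_on \<Omega>) (\<lambda>x. (norm (E1 x))\<^sup>2)"
  and E2m: "E2 \<in> borel_measurable (lebesgue_on \<Omega>)" and E2i: "integrable (lebesgue_on \<Omega>) (\<lambda>x. (norm (E2 x))\<^sup>2)"
  and gpos: "0 < avg \<Omega> (chi P \<alpha>)"
  and vp: "\<not> (AE x in lebesgue_on \<Omega>. vplus P \<alpha> E1 E2 x = 0)"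
  and vm: "\<not> (AE x in lebesgue_on \<Omega>. vminus P \<alpha> E1 E2 x = 0)"
  shows "ratio \<Omega> (vplus P \<alpha> E1 E2) =
     ((norm (avg \<Omega> (Eph P \<alpha> E1)))\<^sup>2 + (norm (avg \<Omega> (Eph P \<alpha> E2)))\<^sup>2 + 2 * (avg \<Omega> (Eph P \<alpha> E1) \<bullet> (Rperp *v avg \<Omega> (Eph P \<alpha> E2))))
     / (eta \<Omega> P \<alpha> E1 E2 + 2 * Bcoef \<Omega> P \<alpha> E1 E2)"
  and "ratio \<Omega> (vminus P \<alpha> E1 E2) =
     ((norm (avg \<Omega> (Eph P \<alpha> E1)))\<^sup>2 + (norm (avg \<Omega> (Eph P \<alpha> E2)))\<^sup>2 - 2 * (avg \<Omega> (Eph P \<alpha> E1) \<bullet> (Rperp *v avg \<Omega> (Eph P \<alpha> E2))))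
     / (eta \<Omega> P \<alpha> E1 E2 - 2 * Bcoef \<Omega> P \<alpha> E1 E2)"
  and "0 < eta \<Omega> P \<alpha> E1 E2 + 2 * Bcoef \<Omega> P \<alpha> E1 E2"
  and "0 < eta \<Omega> P \<alpha> E1 E2 - 2 * Bcoef \<Omega> P \<alpha> E1 E2"
  and "ratio \<Omega> (vplus P \<alpha> E1 E2) \<le> avg \<Omega> (chi P \<alpha>)"
  and "ratio \<Omega> (vminus P \<alpha> E1 E2) \<le> avg \<Omega> (chi P \<alpha>)"
  and "ratio \<Omega> (vplus P \<alpha> E1 E2) = avg \<Omega> (chi P \<alpha>) \<longleftrightarrow>
        (\<exists>c. c \<noteq> 0 \<and> (AE x in lebesgue_on \<Omega>. chi P \<alpha> x = 1 \<longrightarrow> vplus P \<alpha> E1 E2 x = c))"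
  and "ratio \<Omega> (vminus P \<alpha> E1 E2) = avg \<Omega> (chi P \<alpha>) \<longleftrightarrow>
        (\<exists>c. c \<noteq> 0 \<and> (AE x in lebesgue_on \<Omega>. chi P \<alpha> x = 1 \<longrightarrow> vminus P \<alpha> E1 E2 x = c))"
proof -
  define M where "M = lebesgue_on \<Omega>"
  define g where "g = chi P \<alpha>"
  define X where "X = Eph P \<alpha> E1"
  define Y where "Y = Eph P \<alpha> E2"
  have gm: "g \<in> borel_measurable (lebesgue_on \<Omega>)" unfolding g_def by (rule chi_meas[OF Pm])
  have nle: "norm (chi P \<alpha> x *\<^sub>R z) \<le> norm z" for x z using chi01[of P \<alpha> x] by auto
  have sq: "integrable (lebesgue_on \<Omega>) (\<lambda>x. (norm (Eph P \<alpha> E x))\<^sup>2)"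
    if Em: "E \<in> borel_measurable (lebesgue_on \<Omega>)" and Ei: "integrable (lebesgue_on \<Omega>) (\<lambda>x. (norm (E x))\<^sup>2)" for E
    apply (rule Bochner_Integration.integrable_bound[OF Ei])
    unfolding Eph_def using gm[unfolded g_def] Em apply measurable
    using nle by (auto intro!: AE_I2 power_mono)
  have Xm: "X \<in> borel_measurable (lebesgue_on \<Omega>)" unfolding X_def Eph_def using gm[unfolded g_def] E1m by measurable
  have Ym: "Y \<in> borel_measurable (lebesgue_on \<Omega>)" unfolding Y_def Eph_def using gm[unfolded g_def] E2m by measurable
  have Xi: "integrable (lebesgue_on \<Omega>) (\<lambda>x. (norm (X x))\<^sup>2)" unfolding X_def by (rule sq[OF E1m E1i])
  have Yi: "integrable (lebesgue_on \<Omega>) (\<lambda>x. (norm (Y x))\<^sup>2)" unfolding Y_def by (rule sq[OF E2m E2i])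
  note L = avg_lin[OF fin Xm Xi Ym Yi]
  have vpe: "vplus P \<alpha> E1 E2 = (\<lambda>x. X x + Rperp *v Y x)" by (simp add: vplus_def X_def Y_def fun_eq_iff)
  have vme: "vminus P \<alpha> E1 E2 = (\<lambda>x. X x - Rperp *v Y x)" by (simp add: vminus_def X_def Y_def fun_eq_iff)
  have vpg: "vplus P \<alpha> E1 E2 = (\<lambda>x. g x *\<^sub>R (E1 x + Rperp *v E2 x))"
    by (simp add: vplus_def Eph_def g_def fun_eq_iff Rperp_scaleR scaleR_add_right)
  have vmg: "vminus P \<alpha> E1 E2 = (\<lambda>x. g x *\<^sub>R (E1 x - Rperp *v E2 x))"
    by (simp add: vminus_def Eph_def g_def fun_eq_iff Rperp_scaleR scaleR_diff_right)
  have E12i: "integrable (lebesgue_on \<Omega>) (\<lambda>x. 2 * (norm (E1 x))\<^sup>2 + 2 * (norm (E2 x))\<^sup>2)"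
    using E1i E2i by auto
  have bnd: "(norm (a + s)) \<^sup>2 \<le> 2 * (norm a)\<^sup>2 + 2 * (norm s)\<^sup>2" "(norm (a - s)) \<^sup>2 \<le> 2 * (norm a)\<^sup>2 + 2 * (norm s)\<^sup>2" for a s :: pt
  proof -
    have "0 \<le> (norm (a - s))\<^sup>2" "0 \<le> (norm (a + s))\<^sup>2" by simp_all
    then show "(norm (a + s)) \<^sup>2 \<le> 2 * (norm a)\<^sup>2 + 2 * (norm s)\<^sup>2" "(norm (a - s)) \<^sup>2 \<le> 2 * (norm a)\<^sup>2 + 2 * (norm s)\<^sup>2"
      by (simp_all add: power2_norm_eq_inner inner_add_left inner_add_right inner_diff_left inner_diff_right inner_commute)
  qed
  have wpm: "(\<lambda>x. E1 x + Rperp *v E2 x) \<in> borel_measurable (lebesgue_on \<Omega>)"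
    using E1m Rperp_meas[OF E2m] by measurable
  have wmm: "(\<lambda>x. E1 x - Rperp *v E2 x) \<in> borel_measurable (lebesgue_on \<Omega>)"
    using E1m Rperp_meas[OF E2m] by measurable
  have wpi: "integrable (lebesgue_on \<Omega>) (\<lambda>x. (norm (E1 x + Rperp *v E2 x))\<^sup>2)"
    apply (rule Bochner_Integration.integrable_bound[OF E12i])
    using wpm apply measurable
    using bnd(1)[of "E1 _" "Rperp *v E2 _"] by (auto intro!: AE_I2 simp: Rperp_norm)
  have wmi: "integrable (lebesgue_on \<Omega>) (\<lambda>x. (norm (E1 x - Rperp *v E2 x))\<^sup>2)"
    apply (rule Bochner_Integration.integrable_bound[OF E12i])
    using wmm apply measurable
    using bnd(2)[of "E1 _" "Rperp *v E2 _"] by (auto intro!: AE_I2 simp: Rperp_norm)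
  note CP = cs_ratio[OF fin mu gm chi01[of P \<alpha>, folded g_def] wpm wpi gpos[folded g_def] vpg[folded g_def] vp]
  note CM = cs_ratio[OF fin mu gm chi01[of P \<alpha>, folded g_def] wmm wmi gpos[folded g_def] vmg[folded g_def] vm]
  have etaB: "eta \<Omega> P \<alpha> E1 E2 = avg \<Omega> (\<lambda>x. (norm (X x))\<^sup>2) + avg \<Omega> (\<lambda>x. (norm (Y x))\<^sup>2)"
    "Bcoef \<Omega> P \<alpha> E1 E2 = avg \<Omega> (\<lambda>x. X x \<bullet> (Rperp *v Y x))"
    by (simp_all add: eta_def Bcoef_def X_def Y_def)
  have np: "(norm (a + Rperp *v s))\<^sup>2 = (norm a)\<^sup>2 + (norm s)\<^sup>2 + 2 * (a \<bullet> (Rperp *v s))"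
    and nm: "(norm (a - Rperp *v s))\<^sup>2 = (norm a)\<^sup>2 + (norm s)\<^sup>2 - 2 * (a \<bullet> (Rperp *v s))" for a s :: pt
    by (simp_all add: power2_norm_eq_inner inner_add_left inner_add_right inner_diff_left inner_diff_right inner_commute Rperp_inner)
  show "0 < eta \<Omega> P \<alpha> E1 E2 + 2 * Bcoef \<Omega> P \<alpha> E1 E2"
    using CP(1) unfolding etaB by (simp add: vpe L(3))
  show "0 < eta \<Omega> P \<alpha> E1 E2 - 2 * Bcoef \<Omega> P \<alpha> E1 E2"
    using CM(1) unfolding etaB by (simp add: vme L(4))
  show "ratio \<Omega> (vplus P \<alpha> E1 E2) =
     ((norm (avg \<Omega> (Eph P \<alpha> E1)))\<^sup>2 + (norm (avg \<Omega> (Eph P \<alpha> E2)))\<^sup>2 + 2 * (avg \<Omega> (Eph P \<alpha> E1) \<bullet> (Rperp *v avg \<Omega> (Eph P \<alpha> E2))))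
     / (eta \<Omega> P \<alpha> E1 E2 + 2 * Bcoef \<Omega> P \<alpha> E1 E2)"
    unfolding etaB X_def[symmetric] Y_def[symmetric] unfolding ratio_def vpe L(1) by (simp only: L(3) np[of "avg \<Omega> X" "avg \<Omega> Y"])
  show "ratio \<Omega> (vminus P \<alpha> E1 E2) =
     ((norm (avg \<Omega> (Eph P \<alpha> E1)))\<^sup>2 + (norm (avg \<Omega> (Eph P \<alpha> E2)))\<^sup>2 - 2 * (avg \<Omega> (Eph P \<alpha> E1) \<bullet> (Rperp *v avg \<Omega> (Eph P \<alpha> E2))))
     / (eta \<Omega> P \<alpha> E1 E2 - 2 * Bcoef \<Omega> P \<alpha> E1 E2)"
    unfolding etaB X_def[symmetric] Y_def[symmetric] unfolding ratio_def vme L(2) by (simp only: L(4) nm[of "avg \<Omega> X" "avg \<Omega> Y"])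
  show "ratio \<Omega> (vplus P \<alpha> E1 E2) \<le> avg \<Omega> (chi P \<alpha>)"
    using CP(2) by (simp add: g_def)
  show "ratio \<Omega> (vminus P \<alpha> E1 E2) \<le> avg \<Omega> (chi P \<alpha>)"
    using CM(2) by (simp add: g_def)
  show "ratio \<Omega> (vplus P \<alpha> E1 E2) = avg \<Omega> (chi P \<alpha>) \<longleftrightarrow>
        (\<exists>c. c \<noteq> 0 \<and> (AE x in lebesgue_on \<Omega>. chi P \<alpha> x = 1 \<longrightarrow> vplus P \<alpha> E1 E2 x = c))"
    using CP(3) by (simp add: g_def)
  show "ratio \<Omega> (vminus P \<alpha> E1 E2) = avg \<Omega> (chi P \<alpha>) \<longleftrightarrow>
        (\<exists>c. c \<noteq> 0 \<and> (AE x in lebesgue_on \<Omega>. chi P \<alpha> x = 1 \<longrightarrow> vminus P \<alpha> E1 E2 x = c))"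
    using CM(3) by (simp add: g_def)
qed


theorem mainTheorem7:
  fixes \<Omega> P :: "(real^2) set" and V :: "real^2 \<Rightarrow> complex" and E1 E2 :: "real^2 \<Rightarrow> real^2"
    and s1 s2 :: complex
  assumes dom: "lipschitz_domain \<Omega>"
    and P_meas: "P \<in> sets lebesgue" and P_sub: "P \<subseteq> \<Omega>"
    and f1_pos: "0 < avg \<Omega> (chi P 1)" and f1_lt1: "avg \<Omega> (chi P 1) < 1"
    and s_pos: "0 < Re s1" "0 < Re s2" and s_ne: "s1 \<noteq> s2"
    and sol: "weak_solution \<Omega> V s1 s2 P E1 E2"
    and beta: "Re s1 * Im s2 - Im s1 * Re s2 \<noteq> 0"
    and abs_ne: "cmod s1 \<noteq> cmod s2"
    and eta_ne: "eta \<Omega> P 1 E1 E2 \<noteq> 0" "eta \<Omega> P 2 E1 E2 \<noteq> 0"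
    and vp_nz: "\<not> (AE x in lebesgue_on \<Omega>. vplus P 1 E1 E2 x = 0)"
               "\<not> (AE x in lebesgue_on \<Omega>. vplus P 2 E1 E2 x = 0)"
    and vm_nz: "\<not> (AE x in lebesgue_on \<Omega>. vminus P 1 E1 E2 x = 0)"
               "\<not> (AE x in lebesgue_on \<Omega>. vminus P 2 E1 E2 x = 0)"
  shows "ft_el \<Omega> P E1 E2 \<le> avg \<Omega> (chi P 1) \<and> avg \<Omega> (chi P 1) \<le> ft_eu \<Omega> P E1 E2
    \<and> (ft_el \<Omega> P E1 E2 = avg \<Omega> (chi P 1) \<longleftrightarrow>
         (\<exists>c. c \<noteq> 0 \<and> (AE x in lebesgue_on \<Omega>. x \<in> P \<longrightarrow> vplus P 1 E1 E2 x = c))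
       \<or> (\<exists>c. c \<noteq> 0 \<and> (AE x in lebesgue_on \<Omega>. x \<in> P \<longrightarrow> vminus P 1 E1 E2 x = c)))
    \<and> (ft_eu \<Omega> P E1 E2 = avg \<Omega> (chi P 1) \<longleftrightarrow>
         (\<exists>c. c \<noteq> 0 \<and> (AE x in lebesgue_on \<Omega>. x \<notin> P \<longrightarrow> vplus P 2 E1 E2 x = c))
       \<or> (\<exists>c. c \<noteq> 0 \<and> (AE x in lebesgue_on \<Omega>. x \<notin> P \<longrightarrow> vminus P 2 E1 E2 x = c)))
    \<and> f_el \<Omega> P E1 E2 \<le> ft_el \<Omega> P E1 E2
    \<and> (f_el \<Omega> P E1 E2 = ft_el \<Omega> P E1 E2 \<longleftrightarrow>
         Bcoef \<Omega> P 1 E1 E2 * f_el \<Omega> P E1 E2 = avg \<Omega> (Eph P 1 E1) \<bullet> (Rperp *v avg \<Omega> (Eph P 1 E2)))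
    \<and> ft_eu \<Omega> P E1 E2 \<le> f_eu \<Omega> P E1 E2
    \<and> (ft_eu \<Omega> P E1 E2 = f_eu \<Omega> P E1 E2 \<longleftrightarrow>
         Bcoef \<Omega> P 2 E1 E2 * (1 - f_eu \<Omega> P E1 E2) = avg \<Omega> (Eph P 2 E1) \<bullet> (Rperp *v avg \<Omega> (Eph P 2 E2)))"
proof -
  have "open \<Omega>" using dom by (simp add: lipschitz_domain_def)
  then have Om: "\<Omega> \<in> sets lebesgue" by (metis borel_open sets_completionI_sets sets_lborel)
  define \<mu> where "\<mu> = measure lebesgue \<Omega>"
  have "\<mu> \<noteq> 0" using f1_pos by (auto simp: avg_def \<mu>_def)
  then have mu: "0 < measure lebesgue \<Omega>" unfolding \<mu>_def using measure_nonneg[of lebesgue \<Omega>] by linarith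
  have einf: "emeasure lebesgue \<Omega> \<noteq> \<infinity>"
  proof
    assume "emeasure lebesgue \<Omega> = \<infinity>"
    then have "measure lebesgue \<Omega> = 0" by (simp add: measure_def)
    then show False using mu by simp
  qed
  have spc: "space (lebesgue_on \<Omega>) = \<Omega>" using Om by simp
  have em: "emeasure (lebesgue_on \<Omega>) \<Omega> = emeasure lebesgue \<Omega>"
    by (rule emeasure_restrict_space) (use Om in auto)
  have fin: "finite_measure (lebesgue_on \<Omega>)"
    by (rule finite_measureI) (use einf in \<open>simp add: spc em\<close>)
  have mm: "measure (lebesgue_on \<Omega>) \<Omega> = \<mu>" by (simp add: measure_def em \<mu>_def)
  have Pm: "P \<in> sets (lebesgue_on \<Omega>)" using P_meas P_sub Om by (simp add: sets_restrict_space_iff)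
  have H: "H1_with_field \<Omega> V E1 E2" using sol by (simp add: weak_solution_def)
  then have E1m: "E1 \<in> borel_measurable (lebesgue_on \<Omega>)" and E1i: "integrable (lebesgue_on \<Omega>) (\<lambda>x. (norm (E1 x))\<^sup>2)"
    and E2m: "E2 \<in> borel_measurable (lebesgue_on \<Omega>)" and E2i: "integrable (lebesgue_on \<Omega>) (\<lambda>x. (norm (E2 x))\<^sup>2)"
    by (simp_all add: H1_with_field_def)
  define f where "f = avg \<Omega> (chi P 1)"
  have f2: "avg \<Omega> (chi P 2) = 1 - f"
  proof -
    interpret finite_measure "lebesgue_on \<Omega>" by (rule fin)
    have c2: "chi P 2 = (\<lambda>x. 1 - chi P 1 x)" by (simp add: chi_def fun_eq_iff)
    have i1: "integrable (lebesgue_on \<Omega>) (chi P 1)"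
      by (rule Bochner_Integration.integrable_bound[OF integrable_const[of "1::real"] chi_meas[OF Pm]])
         (auto intro!: AE_I2 simp: chi_def indicator_def)
    have "integral\<^sup>L (lebesgue_on \<Omega>) (chi P 2) = \<mu> - integral\<^sup>L (lebesgue_on \<Omega>) (chi P 1)"
      unfolding c2 using i1 by (simp add: Bochner_Integration.integral_diff spc mm)
    then show ?thesis using mu by (simp add: avg_def f_def \<mu>_def[symmetric] field_simps)
  qed
  have f2pos: "0 < avg \<Omega> (chi P 2)" using f2 f1_lt1 by (simp add: f_def)
  note A1 = phase[OF fin mu Pm E1m E1i E2m E2i f1_pos vp_nz(1) vm_nz(1)]
  note A2 = phase[OF fin mu Pm E1m E1i E2m E2i f2pos vp_nz(2) vm_nz(2)]
  have ch1: "\<And>x. chi P 1 x = 1 \<longleftrightarrow> x \<in> P" by (simp add: chi_def indicator_def)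
  have ch2: "\<And>x. chi P 2 x = 1 \<longleftrightarrow> x \<notin> P" by (simp add: chi_def indicator_def)
  note A1' = A1[unfolded ch1] and A2' = A2[unfolded ch2 f2]
  note M1 = mediant[OF A1(3) A1(4), of "(norm (avg \<Omega> (Eph P 1 E1)))\<^sup>2 + (norm (avg \<Omega> (Eph P 1 E2)))\<^sup>2"
      "avg \<Omega> (Eph P 1 E1) \<bullet> (Rperp *v avg \<Omega> (Eph P 1 E2))", folded A1(1) A1(2)]
  note M2 = mediant[OF A2(3) A2(4), of "(norm (avg \<Omega> (Eph P 2 E1)))\<^sup>2 + (norm (avg \<Omega> (Eph P 2 E2)))\<^sup>2"
      "avg \<Omega> (Eph P 2 E1) \<bullet> (Rperp *v avg \<Omega> (Eph P 2 E2))", folded A2(1) A2(2)]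
  have fel: "f_el \<Omega> P E1 E2 = ((norm (avg \<Omega> (Eph P 1 E1)))\<^sup>2 + (norm (avg \<Omega> (Eph P 1 E2)))\<^sup>2) / eta \<Omega> P 1 E1 E2"
    by (simp add: f_el_def)
  have feu: "1 - f_eu \<Omega> P E1 E2 = ((norm (avg \<Omega> (Eph P 2 E1)))\<^sup>2 + (norm (avg \<Omega> (Eph P 2 E2)))\<^sup>2) / eta \<Omega> P 2 E1 E2"
    by (simp add: f_eu_def)
  have fteu: "ft_eu \<Omega> P E1 E2 = 1 - max (ratio \<Omega> (vminus P 2 E1 E2)) (ratio \<Omega> (vplus P 2 E1 E2))"
    by (simp add: ft_eu_def min_def max_def)
  have ftel: "ft_el \<Omega> P E1 E2 = max (ratio \<Omega> (vminus P 1 E1 E2)) (ratio \<Omega> (vplus P 1 E1 E2))"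
    by (simp add: ft_el_def)
  show ?thesis
  proof (intro conjI)
    show "ft_el \<Omega> P E1 E2 \<le> avg \<Omega> (chi P 1)" using A1(5,6) ftel by simp
    show "avg \<Omega> (chi P 1) \<le> ft_eu \<Omega> P E1 E2" using A2'(5,6) fteu by (simp add: f_def)
    show "ft_el \<Omega> P E1 E2 = avg \<Omega> (chi P 1) \<longleftrightarrow>
         (\<exists>c. c \<noteq> 0 \<and> (AE x in lebesgue_on \<Omega>. x \<in> P \<longrightarrow> vplus P 1 E1 E2 x = c))
       \<or> (\<exists>c. c \<noteq> 0 \<and> (AE x in lebesgue_on \<Omega>. x \<in> P \<longrightarrow> vminus P 1 E1 E2 x = c))"
      using A1'(5,6,7,8) unfolding ftel by (auto simp: max_def)
    show "ft_eu \<Omega> P E1 E2 = avg \<Omega> (chi P 1) \<longleftrightarrow>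
         (\<exists>c. c \<noteq> 0 \<and> (AE x in lebesgue_on \<Omega>. x \<notin> P \<longrightarrow> vplus P 2 E1 E2 x = c))
       \<or> (\<exists>c. c \<noteq> 0 \<and> (AE x in lebesgue_on \<Omega>. x \<notin> P \<longrightarrow> vminus P 2 E1 E2 x = c))"
      using A2'(5,6,7,8) unfolding fteu f_def[symmetric] by (auto simp: max_def)
    show "f_el \<Omega> P E1 E2 \<le> ft_el \<Omega> P E1 E2" using M1(1) fel ftel by simp
    show "f_el \<Omega> P E1 E2 = ft_el \<Omega> P E1 E2 \<longleftrightarrow>
         Bcoef \<Omega> P 1 E1 E2 * f_el \<Omega> P E1 E2 = avg \<Omega> (Eph P 1 E1) \<bullet> (Rperp *v avg \<Omega> (Eph P 1 E2))"
      using M1(2) fel ftel by simp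
    show "ft_eu \<Omega> P E1 E2 \<le> f_eu \<Omega> P E1 E2" using M2(1) feu fteu by simp
    show "ft_eu \<Omega> P E1 E2 = f_eu \<Omega> P E1 E2 \<longleftrightarrow>
         Bcoef \<Omega> P 2 E1 E2 * (1 - f_eu \<Omega> P E1 E2) = avg \<Omega> (Eph P 2 E1) \<bullet> (Rperp *v avg \<Omega> (Eph P 2 E2))"
    proof -
      have "ft_eu \<Omega> P E1 E2 = f_eu \<Omega> P E1 E2 \<longleftrightarrow> 1 - f_eu \<Omega> P E1 E2 = max (ratio \<Omega> (vminus P 2 E1 E2)) (ratio \<Omega> (vplus P 2 E1 E2))"
        using fteu by linarith
      then show ?thesis using M2(2) feu by simp
    qed
  qed
qed

end
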